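(* Let $G$ be an infinite countable amenable group and $A\subseteq G$ a stable subset of positive upper Banach density. Then there are infinite sets $B\subseteq A\cdot A^{-1}$ and $C\subseteq A$ such that $B\cdot C\subseteq A$.
   Context: A sequence $(F_n)$ of finite subsets of a countable group $G$ is a (left) Følner sequence if $|F_n|\to\infty$ and $|F_n\cap gF_n|/|F_n|\to1$ for all $g\in G$; $G$ is amenable if it admits one. For a Følner sequence $\mathcal F$, $\bar d_{\mathcal F}(A)=\limsup_n|A\cap F_n|/|F_n|$, and the upper Banach density is $d^*(A)=\sup\{\bar d_{\mathcal F}(A):\mathcal F\text{ a left Følner sequence}\}$. A subset $A\subseteq G$ is stable if the relation $y\cdot x\in A$ is stable, i.e. there is $n$ such that there are no $a_1,\dots,a_n,b_1,\dots,b_n\in G$ with $b_j\cdot a_i\in A\iff i\le j$. *)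

theory Defs
  imports "HOL-Algebra.Coset" "HOL-Library.Countable_Set" "HOL-Library.Liminf_Limsup"
    "HOL-Library.Extended_Real"
begin

definition folner_seq :: "('a, 'b) monoid_scheme \<Rightarrow> (nat \<Rightarrow> 'a set) \<Rightarrow> bool" where
  "folner_seq G F \<longleftrightarrow>
     (\<forall>n. finite (F n) \<and> F n \<subseteq> carrier G) \<and>
     filterlim (\<lambda>n. card (F n)) at_top sequentially \<and>
     (\<forall>g\<in>carrier G.
        (\<lambda>n. real (card (F n \<inter> l_coset G g (F n))) / real (card (F n))) \<longlonglongrightarrow> 1)"

definition amenable :: "('a, 'b) monoid_scheme \<Rightarrow> bool" where
  "amenable G \<longleftrightarrow> (\<exists>F. folner_seq G F)"

definition upper_density_along :: "(nat \<Rightarrow> 'a set) \<Rightarrow> 'a set \<Rightarrow> ereal" where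
  "upper_density_along F A =
     limsup (\<lambda>n. ereal (real (card (A \<inter> F n)) / real (card (F n))))"

definition upper_banach_density :: "('a, 'b) monoid_scheme \<Rightarrow> 'a set \<Rightarrow> ereal" where
  "upper_banach_density G A = (SUP F \<in> {F. folner_seq G F}. upper_density_along F A)"

text \<open>A is stable: the relation  y * x \<in> A  has no half-graphs of some size n.\<close>
definition stable_set :: "('a, 'b) monoid_scheme \<Rightarrow> 'a set \<Rightarrow> bool" where
  "stable_set G A \<longleftrightarrow>
     (\<exists>n::nat. \<not> (\<exists>a b :: nat \<Rightarrow> 'a.
        (\<forall>i<n. a i \<in> carrier G \<and> b i \<in> carrier G) \<and>
        (\<forall>i<n. \<forall>j<n. (b j \<otimes>\<^bsub>G\<^esub> a i \<in> A \<longleftrightarrow> i \<le> j))))"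

end

theory Submission
  imports Defs "HOL-Library.Ramsey"
begin

lemma l_coset_image: "l_coset G g H = (\<lambda>h. g \<otimes>\<^bsub>G\<^esub> h) ` H"
  by (auto simp: l_coset_def)


lemma bonf:
  fixes N :: nat
  assumes "finite S"
  shows "(\<Sum>k<N. card (Y k \<inter> S)) \<le> card (\<Union>k<N. Y k \<inter> S) + (\<Sum>l<N. \<Sum>k<l. card (Y k \<inter> Y l \<inter> S))"
proof (induction N)
  case 0 then show ?case by simp
next
  case (Suc N)
  let ?U = "\<Union>k<N. Y k \<inter> S"
  have fU: "finite ?U" using assms by auto
  have e1: "card ?U + card (Y N \<inter> S) = card (?U \<union> (Y N \<inter> S)) + card (?U \<inter> (Y N \<inter> S))"
    using card_Un_Int[of ?U "Y N \<inter> S"] fU assms by auto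
  have e2: "?U \<inter> (Y N \<inter> S) = (\<Union>k<N. Y k \<inter> Y N \<inter> S)" by auto
  have e3: "card (\<Union>k<N. Y k \<inter> Y N \<inter> S) \<le> (\<Sum>k<N. card (Y k \<inter> Y N \<inter> S))"
    by (rule card_UN_le) simp
  have e4: "(\<Union>k<Suc N. Y k \<inter> S) = ?U \<union> (Y N \<inter> S)" by (auto simp: lessThan_Suc)
  show ?case unfolding e4 sum.lessThan_Suc using Suc.IH e1[unfolded e2] e3 by linarith
qed

lemma (in group) gseq:
  fixes N :: nat
  assumes inf: "infinite (carrier G)" and S: "finite S"
  shows "\<exists>g. (\<forall>k<N. g k \<in> carrier G) \<and> (\<forall>k l. k < l \<longrightarrow> l < N \<longrightarrow> inv (g l) \<otimes> g k \<notin> S)"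
proof (induction N)
  case 0 then show ?case by auto
next
  case (Suc N)
  then obtain g where g: "\<forall>k<N. g k \<in> carrier G" "\<forall>k l. k < l \<longrightarrow> l < N \<longrightarrow> inv (g l) \<otimes> g k \<notin> S"
    by auto
  let ?T = "(\<lambda>(k,s). g k \<otimes> inv s) ` ({..<N} \<times> (S \<inter> carrier G))"
  have "finite ?T" using S by auto
  hence "infinite (carrier G - ?T)" using inf by (simp add: Diff_infinite_finite)
  then obtain x where "x \<in> carrier G - ?T" using infinite_imp_nonempty by blast
  hence x: "x \<in> carrier G" "x \<notin> ?T" by auto
  let ?g = "g(N := x)"
  have "inv (?g l) \<otimes> ?g k \<notin> S" if "k < l" "l < Suc N" for k l
  proof (cases "l = N")
    case True
    show ?thesis
    proof
      assume a: "inv (?g l) \<otimes> ?g k \<in> S"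
      have kN: "k < N" "k \<noteq> N" using that True by auto
      have gk: "g k \<in> carrier G" using g kN by auto
      have s: "inv x \<otimes> g k \<in> S" using a True kN by simp
      have sc: "inv x \<otimes> g k \<in> carrier G" using x gk by simp
      have "g k \<otimes> inv (inv x \<otimes> g k) = x"
        using x gk by (simp add: inv_mult_group m_assoc[symmetric])
      hence "x \<in> ?T" using s sc kN
        by (auto intro!: image_eqI[of _ _ "(k, inv x \<otimes> g k)"])
      thus False using x by simp
    qed
  next
    case False then show ?thesis using g that by auto
  qed
  moreover have "\<forall>k<Suc N. ?g k \<in> carrier G" using g x by auto
  ultimately show ?case by blast
qed

locale fol = group G for G (structure) +
  fixes F :: "nat \<Rightarrow> 'a set"
  assumes fol: "folner_seq G F"
begin

definition ratio :: "'a \<Rightarrow> nat \<Rightarrow> real" where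
  "ratio g n = real (card (F n \<inter> l_coset G g (F n))) / real (card (F n))"

definition Pos :: "'a set \<Rightarrow> bool" where
  "Pos X \<longleftrightarrow> (\<exists>e>0. \<exists>\<^sub>F n in sequentially. e * real (card (F n)) \<le> real (card (X \<inter> F n)))"

lemma Ffin: "finite (F n)" and Fcar: "F n \<subseteq> carrier G"
  using fol by (auto simp: folner_seq_def)

lemma Fbig: "eventually (\<lambda>n. k \<le> card (F n)) sequentially"
  using fol by (auto simp: folner_seq_def filterlim_at_top)

lemma ratio_ev: assumes "g \<in> carrier G" "d > 0"
  shows "eventually (\<lambda>n. 1 - ratio g n \<le> d) sequentially"
proof -
  have r1: "ratio g \<longlonglongrightarrow> 1" unfolding ratio_def[abs_def] using fol assms(1) by (auto simp: folner_seq_def)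
  hence "(\<lambda>n. 1 - ratio g n) \<longlonglongrightarrow> 0"
    using tendsto_diff[OF tendsto_const r1, of 1] by simp
  from order_tendstoD(2)[OF this, of d] assms(2) show ?thesis
    by (auto elim: eventually_mono)
qed

lemma transl_ineq:
  assumes g: "g \<in> carrier G" and X: "X \<subseteq> carrier G"
  shows "real (card (X \<inter> F n)) \<le> real (card (l_coset G g X \<inter> F n)) + (1 - ratio g n) * real (card (F n))"
proof -
  let ?f = "\<lambda>h. g \<otimes> h"
  have inj: "inj_on ?f (carrier G)" using g by (auto simp: inj_on_def)
  have fin: "finite (F n)" by (rule Ffin)
  have c1: "card (?f ` (X \<inter> F n)) = card (X \<inter> F n)"
    using inj X by (auto intro!: card_image inj_on_subset[OF inj])
  have c2: "card (?f ` F n) = card (F n)"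
    using inj Fcar by (auto intro!: card_image inj_on_subset[OF inj])
  have sub: "?f ` (X \<inter> F n) \<subseteq> (l_coset G g X \<inter> F n) \<union> (?f ` F n - F n)"
    by (auto simp: l_coset_image)
  have "card (?f ` (X \<inter> F n)) \<le> card ((l_coset G g X \<inter> F n) \<union> (?f ` F n - F n))"
    by (rule card_mono[OF _ sub]) (use fin in auto)
  also have "\<dots> \<le> card (l_coset G g X \<inter> F n) + card (?f ` F n - F n)"
    by (rule card_Un_le)
  finally have A: "card (X \<inter> F n) \<le> card (l_coset G g X \<inter> F n) + card (?f ` F n - F n)"
    using c1 by simp
  have B: "card (?f ` F n - F n) = card (F n) - card (F n \<inter> ?f ` F n)"
    using card_Diff_subset_Int[of "?f ` F n" "F n"] fin c2 by (simp add: Int_commute)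
  have C: "card (F n \<inter> ?f ` F n) \<le> card (F n)" using fin by (simp add: card_mono)
  have D: "real (card (?f ` F n - F n)) = (1 - ratio g n) * real (card (F n))"
  proof (cases "card (F n) = 0")
    case True then show ?thesis using B by simp
  next
    case False then show ?thesis using B C
      by (simp add: ratio_def l_coset_image field_simps of_nat_diff)
  qed
  show ?thesis using A D by linarith
qed

lemma Pos_mono: assumes "X \<subseteq> Y" "Pos X" shows "Pos Y"
proof -
  obtain e where e: "e > 0" "\<exists>\<^sub>F n in sequentially. e * real (card (F n)) \<le> real (card (X \<inter> F n))"
    using assms(2) by (auto simp: Pos_def)
  have "card (X \<inter> F n) \<le> card (Y \<inter> F n)" for n
    using assms(1) Ffin by (intro card_mono) auto
  hence "\<exists>\<^sub>F n in sequentially. e * real (card (F n)) \<le> real (card (Y \<inter> F n))"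
    using e(2) by (elim frequently_elim1) (meson of_nat_le_iff order_trans)
  thus ?thesis using e(1) by (auto simp: Pos_def)
qed

lemma Pos_inf: assumes "Pos X" shows "infinite X"
proof
  assume fin: "finite X"
  obtain e where e: "e > 0" "\<exists>\<^sub>F n in sequentially. e * real (card (F n)) \<le> real (card (X \<inter> F n))"
    using assms by (auto simp: Pos_def)
  have "eventually (\<lambda>n. nat \<lceil>real (card X) / e\<rceil> + 1 \<le> card (F n)) sequentially" by (rule Fbig)
  moreover have "card (X \<inter> F n) \<le> card X" for n using fin by (simp add: card_mono)
  ultimately have "eventually (\<lambda>n. \<not> e * real (card (F n)) \<le> real (card (X \<inter> F n))) sequentially"
  proof (elim eventually_mono)
    fix n assume h: "nat \<lceil>real (card X) / e\<rceil> + 1 \<le> card (F n)"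
    have "real (card X) / e < real (card (F n))" using h by linarith
    hence "real (card X) < e * real (card (F n))" using e(1) by (simp add: field_simps)
    thus "\<not> e * real (card (F n)) \<le> real (card (X \<inter> F n))"
      using \<open>\<And>n. card (X \<inter> F n) \<le> card X\<close>[of n] by linarith
  qed
  thus False using e(2) by (simp add: frequently_def)
qed

lemma Pos_transl: assumes g: "g \<in> carrier G" and X: "X \<subseteq> carrier G" and P: "Pos X"
  shows "Pos (l_coset G g X)"
proof -
  obtain e where e: "e > 0" "\<exists>\<^sub>F n in sequentially. e * real (card (F n)) \<le> real (card (X \<inter> F n))"
    using P by (auto simp: Pos_def)
  have ev: "eventually (\<lambda>n. 1 - ratio g n \<le> e/2) sequentially" using ratio_ev[OF g, of "e/2"] e(1) by simp
  have "\<exists>\<^sub>F n in sequentially. e/2 * real (card (F n)) \<le> real (card (l_coset G g X \<inter> F n))"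
    using e(2)
  proof (rule frequently_rev_mp)
    show "\<forall>\<^sub>F n in sequentially. e * real (card (F n)) \<le> real (card (X \<inter> F n)) \<longrightarrow>
        e/2 * real (card (F n)) \<le> real (card (l_coset G g X \<inter> F n))"
      using ev
    proof (elim eventually_mono, intro impI)
      fix n assume a: "1 - ratio g n \<le> e/2" and b: "e * real (card (F n)) \<le> real (card (X \<inter> F n))"
      have c: "(1 - ratio g n) * real (card (F n)) \<le> e/2 * real (card (F n))"
        using a by (intro mult_right_mono) auto
      show "e/2 * real (card (F n)) \<le> real (card (l_coset G g X \<inter> F n))"
        using transl_ineq[OF g X, of n] b c by linarith
    qed
  qed
  thus ?thesis using e(1) by (auto simp: Pos_def intro!: exI[of _ "e/2"])
qed

lemma step:
  assumes X: "X \<subseteq> carrier G" and P: "Pos X" and S: "finite S" and inf: "infinite (carrier G)"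
  shows "\<exists>b\<in>carrier G - S. Pos (X \<inter> {x\<in>carrier G. b \<otimes> x \<in> X})"
proof -
  obtain e where e: "e > 0" "\<exists>\<^sub>F n in sequentially. e * real (card (F n)) \<le> real (card (X \<inter> F n))"
    using P by (auto simp: Pos_def)
  define N where "N = nat \<lceil>2/e\<rceil>"
  have "2/e \<le> real N" unfolding N_def by (rule real_nat_ceiling_ge)
  hence Ne: "2 \<le> real N * e" using e(1) by (simp add: pos_divide_le_eq)
  have N0: "N > 0" using Ne by (cases N) auto
  obtain g where g: "\<forall>k<N. g k \<in> carrier G" "\<forall>k l. k < l \<longrightarrow> l < N \<longrightarrow> inv (g l) \<otimes> g k \<notin> S"
    using gseq[OF inf S] by blast
  define Y where "Y k = l_coset G (g k) X" for k
  have ev1: "eventually (\<lambda>n. \<forall>k\<in>{..<N}. 1 - ratio (g k) n \<le> 1/(2*N)) sequentially"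
    using g(1) N0 by (intro eventually_ball_finite) (auto intro!: ratio_ev)
  have ev2: "eventually (\<lambda>n. 1 \<le> card (F n)) sequentially" by (rule Fbig)
  define c where "c = 1 / (4 * real N * real N)"
  have c0: "c > 0" using N0 by (simp add: c_def)
  have fr: "\<exists>\<^sub>F n in sequentially. \<exists>p\<in>{p. fst p < snd p \<and> snd p < N}.
       c * real (card (F n)) \<le> real (card ((Y (fst p) \<inter> Y (snd p)) \<inter> F n))"
    using e(2)
  proof (rule frequently_rev_mp)
    show "\<forall>\<^sub>F n in sequentially. e * real (card (F n)) \<le> real (card (X \<inter> F n)) \<longrightarrow>
      (\<exists>p\<in>{p. fst p < snd p \<and> snd p < N}. c * real (card (F n)) \<le> real (card ((Y (fst p) \<inter> Y (snd p)) \<inter> F n)))"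
    proof (rule eventually_mono[OF eventually_conj[OF ev1 ev2]], intro impI)
      fix n assume h12: "(\<forall>k\<in>{..<N}. 1 - ratio (g k) n \<le> 1/(2*N)) \<and> 1 \<le> card (F n)"
        and h3: "e * real (card (F n)) \<le> real (card (X \<inter> F n))"
      have h1: "\<forall>k\<in>{..<N}. 1 - ratio (g k) n \<le> 1/(2*N)" and h2: "1 \<le> card (F n)" using h12 by auto
      define f where "f = real (card (F n))"
      have f1: "f \<ge> 1" using h2 by (simp add: f_def)
      have lb: "(e - 1/(2*N)) * f \<le> real (card (Y k \<inter> F n))" if "k < N" for k
      proof -
        have "(1 - ratio (g k) n) * f \<le> 1/(2*N) * f"
          using h1 that f1 by (intro mult_right_mono) auto
        thus ?thesis using transl_ineq[OF _ X, of "g k" n] g(1) that h3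
          unfolding Y_def f_def by (simp add: algebra_simps)
      qed
      have "(\<Sum>k<N. (e - 1/(2*N)) * f) \<le> (\<Sum>k<N. real (card (Y k \<inter> F n)))"
        using lb by (intro sum_mono) auto
      moreover have "(\<Sum>k<N. (e - 1/(2*N)) * f) = (real N * e - 1/2) * f"
        using N0 by (simp add: field_simps)
      moreover have "(\<Sum>k<N. card (Y k \<inter> F n)) \<le> card (F n) + (\<Sum>l<N. \<Sum>k<l. card (Y k \<inter> Y l \<inter> F n))"
      proof -
        have "card (\<Union>k<N. Y k \<inter> F n) \<le> card (F n)" using Ffin by (intro card_mono) auto
        thus ?thesis using bonf[OF Ffin[of n], of Y N] by linarith
      qed
      hence "(\<Sum>k<N. real (card (Y k \<inter> F n))) \<le> f + (\<Sum>l<N. \<Sum>k<l. real (card (Y k \<inter> Y l \<inter> F n)))"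
        by (simp only: f_def of_nat_sum[symmetric] of_nat_add[symmetric] of_nat_le_iff)
      moreover have "0 \<le> (real N * e - 2) * f" using Ne f1 by simp
      ultimately have big: "f/2 \<le> (\<Sum>l<N. \<Sum>k<l. real (card (Y k \<inter> Y l \<inter> F n)))"
        by (simp add: algebra_simps)
      show "\<exists>p\<in>{p. fst p < snd p \<and> snd p < N}. c * real (card (F n)) \<le> real (card ((Y (fst p) \<inter> Y (snd p)) \<inter> F n))"
      proof (rule ccontr)
        assume "\<not> ?thesis"
        hence lt: "real (card (Y k \<inter> Y l \<inter> F n)) \<le> c * f" if "k < l" "l < N" for k l
          using that unfolding f_def by (force simp: Int_assoc)
        have "(\<Sum>l<N. \<Sum>k<l. real (card (Y k \<inter> Y l \<inter> F n))) \<le> (\<Sum>l<N. \<Sum>k<l. c * f)"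
          using lt by (intro sum_mono) auto
        also have "\<dots> \<le> (\<Sum>l<N. real N * (c * f))"
          using c0 f1 by (intro sum_mono) (auto intro!: mult_right_mono)
        also have "\<dots> = f / 4" using N0 by (simp add: c_def field_simps)
        finally show False using big f1 by linarith
      qed
    qed
  qed
  have finp: "finite {p. fst p < snd p \<and> snd p < (N::nat)}"
    by (rule finite_subset[of _ "{..<N} \<times> {..<N}"]) auto
  obtain p where p: "fst p < snd p" "snd p < N"
    and pf: "\<exists>\<^sub>F n in sequentially. c * real (card (F n)) \<le> real (card ((Y (fst p) \<inter> Y (snd p)) \<inter> F n))"
    using frequently_bex_finite[OF finp fr] by auto
  define k where "k = fst p"
  define l where "l = snd p"
  have kl: "k < l" "l < N" using p by (auto simp: k_def l_def)
  have gk: "g k \<in> carrier G" and gl: "g l \<in> carrier G" using g(1) kl by auto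
  have PY: "Pos (Y k \<inter> Y l)" using pf c0 unfolding Pos_def k_def l_def by blast
  have Ysub: "Y k \<inter> Y l \<subseteq> carrier G" using gk X by (auto simp: Y_def l_coset_image)
  have P2: "Pos (l_coset G (inv (g k)) (Y k \<inter> Y l))"
    by (rule Pos_transl[OF _ Ysub PY]) (use gk in simp)
  define b where "b = inv (g l) \<otimes> g k"
  have bS: "b \<in> carrier G - S" using g kl gk gl by (auto simp: b_def)
  have "l_coset G (inv (g k)) (Y k \<inter> Y l) \<subseteq> X \<inter> {x\<in>carrier G. b \<otimes> x \<in> X}"
  proof
    fix z assume "z \<in> l_coset G (inv (g k)) (Y k \<inter> Y l)"
    then obtain x1 x2 where x: "x1 \<in> X" "x2 \<in> X" "z = inv (g k) \<otimes> (g k \<otimes> x1)" "g k \<otimes> x1 = g l \<otimes> x2"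
      by (auto simp: l_coset_image Y_def)
    have x1c: "x1 \<in> carrier G" and x2c: "x2 \<in> carrier G" using x X by auto
    have z: "z = x1" using x(3) gk x1c by (simp add: m_assoc[symmetric])
    have "b \<otimes> z = inv (g l) \<otimes> (g k \<otimes> x1)" using z gk gl x1c by (simp add: b_def m_assoc)
    also have "\<dots> = x2" using x(4) gl x2c by (simp add: m_assoc[symmetric])
    finally show "z \<in> X \<inter> {x\<in>carrier G. b \<otimes> x \<in> X}" using z x x1c by auto
  qed
  thus ?thesis using Pos_mono P2 bS by blast
qed

end
context fol begin

lemma pick:
  assumes inf: "infinite (carrier G)" and A: "A \<subseteq> carrier G"
    and D: "D \<subseteq> A" "Pos D" and U: "finite U1" "finite U2"
  shows "\<exists>c b. c \<in> D - U1 \<and> b \<in> carrier G - U2 \<and> D \<inter> {x\<in>carrier G. b \<otimes> x \<in> A} \<subseteq> A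
     \<and> Pos (D \<inter> {x\<in>carrier G. b \<otimes> x \<in> A})"
proof -
  have "infinite (D - U1)" using Pos_inf[OF D(2)] U(1) by (simp add: Diff_infinite_finite)
  then obtain c where c: "c \<in> D - U1" using infinite_imp_nonempty by blast
  obtain b where b: "b \<in> carrier G - U2" "Pos (D \<inter> {x\<in>carrier G. b \<otimes> x \<in> D})"
    using step[OF _ D(2) U(2) inf] D(1) A by blast
  have "D \<inter> {x\<in>carrier G. b \<otimes> x \<in> D} \<subseteq> D \<inter> {x\<in>carrier G. b \<otimes> x \<in> A}" using D(1) by auto
  hence "Pos (D \<inter> {x\<in>carrier G. b \<otimes> x \<in> A})" using Pos_mono b(2) by blast
  thus ?thesis using c b D(1) by blast
qed

lemma construct:
  assumes inf: "infinite (carrier G)" and A: "A \<subseteq> carrier G" and PA: "Pos A"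
  shows "\<exists>(c::nat \<Rightarrow> 'a) (b::nat \<Rightarrow> 'a). (\<forall>n. c n \<in> A) \<and> inj c \<and> inj b \<and> (\<forall>n. b n \<in> carrier G) \<and>
     (\<forall>j i. j < i \<longrightarrow> b j \<otimes> c i \<in> A)"
proof -
  define P where "P = (\<lambda>(n::nat) (s :: 'a \<times> 'a \<times> 'a set \<times> 'a set \<times> 'a set).
     fst (snd (snd s)) \<subseteq> A \<and> Pos (fst (snd (snd s))) \<and> finite (fst (snd (snd (snd s)))) \<and>
     finite (snd (snd (snd (snd s)))) \<and> fst s \<in> fst (snd (snd s)) - fst (snd (snd (snd s))) \<and>
     fst (snd s) \<in> carrier G - snd (snd (snd (snd s))) \<and>
     fst (snd (snd s)) \<inter> {x\<in>carrier G. fst (snd s) \<otimes> x \<in> A} \<subseteq> A \<and>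
     Pos (fst (snd (snd s)) \<inter> {x\<in>carrier G. fst (snd s) \<otimes> x \<in> A}))"
  define Q where "Q = (\<lambda>(n::nat) (s :: 'a \<times> 'a \<times> 'a set \<times> 'a set \<times> 'a set) (t :: 'a \<times> 'a \<times> 'a set \<times> 'a set \<times> 'a set).
     fst (snd (snd t)) = fst (snd (snd s)) \<inter> {x\<in>carrier G. fst (snd s) \<otimes> x \<in> A} \<and>
     fst (snd (snd (snd t))) = insert (fst s) (fst (snd (snd (snd s)))) \<and>
     snd (snd (snd (snd t))) = insert (fst (snd s)) (snd (snd (snd (snd s)))))"
  have "\<exists>x. P 0 x"
  proof -
    obtain c b where "c \<in> A - {} \<and> b \<in> carrier G - {} \<and> A \<inter> {x\<in>carrier G. b \<otimes> x \<in> A} \<subseteq> A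
     \<and> Pos (A \<inter> {x\<in>carrier G. b \<otimes> x \<in> A})"
      using pick[OF inf A order_refl PA, of "{}" "{}"] by blast
    thus ?thesis unfolding P_def using PA by (intro exI[of _ "(c, b, A, {}, {})"]) auto
  qed
  moreover have "\<exists>y. P (Suc n) y \<and> Q n x y" if "P n x" for x n
  proof -
    obtain c b D U1 U2 where x: "x = (c, b, D, U1, U2)" by (cases x) auto
    have h: "D \<inter> {x\<in>carrier G. b \<otimes> x \<in> A} \<subseteq> A" "Pos (D \<inter> {x\<in>carrier G. b \<otimes> x \<in> A})"
      "finite U1" "finite U2" using that unfolding P_def x by auto
    obtain c' b' where cb: "c' \<in> (D \<inter> {x\<in>carrier G. b \<otimes> x \<in> A}) - insert c U1 \<and> b' \<in> carrier G - insert b U2 \<and>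
       (D \<inter> {x\<in>carrier G. b \<otimes> x \<in> A}) \<inter> {x\<in>carrier G. b' \<otimes> x \<in> A} \<subseteq> A
     \<and> Pos ((D \<inter> {x\<in>carrier G. b \<otimes> x \<in> A}) \<inter> {x\<in>carrier G. b' \<otimes> x \<in> A})"
      using pick[OF inf A h(1,2), of "insert c U1" "insert b U2"] h(3,4) by blast
    show ?thesis
      using cb h unfolding P_def Q_def x
      by (intro exI[of _ "(c', b', D \<inter> {x\<in>carrier G. b \<otimes> x \<in> A}, insert c U1, insert b U2)"]) auto
  qed
  ultimately obtain f where f: "\<And>n. P n (f n)" "\<And>n. Q n (f n) (f (Suc n))"
    using dependent_nat_choice[of P Q] by blast
  define c where "c n = fst (f n)" for n
  define b where "b n = fst (snd (f n))" for n
  define D where "D n = fst (snd (snd (f n)))" for n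
  define U1 where "U1 n = fst (snd (snd (snd (f n))))" for n
  define U2 where "U2 n = snd (snd (snd (snd (f n))))" for n
  have Pn: "D n \<subseteq> A" "c n \<in> D n - U1 n" "b n \<in> carrier G - U2 n" for n
    using f(1)[of n] unfolding P_def c_def b_def D_def U1_def U2_def by auto
  have Qn: "D (Suc n) = D n \<inter> {x\<in>carrier G. b n \<otimes> x \<in> A}" "U1 (Suc n) = insert (c n) (U1 n)"
    "U2 (Suc n) = insert (b n) (U2 n)" for n
    using f(2)[of n] unfolding Q_def c_def b_def D_def U1_def U2_def by auto
  have mono: "D (m + k) \<subseteq> D m" for m k
    by (induction k) (use Qn in auto)
  have U1m: "c j \<in> U1 (Suc j + k)" for j k by (induction k) (use Qn in auto)
  have U2m: "b j \<in> U2 (Suc j + k)" for j k by (induction k) (use Qn in auto)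
  have lt: "j < i \<Longrightarrow> \<exists>k. i = Suc j + k" for i j :: nat by presburger
  have rel: "b j \<otimes> c i \<in> A" if ji: "j < i" for i j
  proof -
    obtain k where k: "i = Suc j + k" using lt[OF ji] by blast
    have "c i \<in> D (Suc j)" using Pn(2)[of i] mono[of "Suc j" k] k by auto
    thus ?thesis using Qn(1)[of j] by auto
  qed
  have injc: "inj c"
  proof (rule injI)
    fix i j assume e: "c i = c j"
    show "i = j"
    proof (rule ccontr)
      assume "i \<noteq> j"
      then consider "i < j" | "j < i" by linarith
      thus False
      proof cases
        case 1 then obtain k where "j = Suc i + k" using lt by blast
        thus False using U1m[of i k] Pn(2)[of j] e by auto
      next
        case 2 then obtain k where "i = Suc j + k" using lt by blast
        thus False using U1m[of j k] Pn(2)[of i] e by auto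
      qed
    qed
  qed
  have injb: "inj b"
  proof (rule injI)
    fix i j assume e: "b i = b j"
    show "i = j"
    proof (rule ccontr)
      assume "i \<noteq> j"
      then consider "i < j" | "j < i" by linarith
      thus False
      proof cases
        case 1 then obtain k where "j = Suc i + k" using lt by blast
        thus False using U2m[of i k] Pn(3)[of j] e by auto
      next
        case 2 then obtain k where "i = Suc j + k" using lt by blast
        thus False using U2m[of j k] Pn(3)[of i] e by auto
      qed
    qed
  qed
  have cA: "\<forall>n. c n \<in> A" using Pn(1,2) by blast
  have bG: "\<forall>n. b n \<in> carrier G" using Pn(3) by blast
  have "(\<forall>n. c n \<in> A) \<and> inj c \<and> inj b \<and> (\<forall>n. b n \<in> carrier G) \<and> (\<forall>j i. j < i \<longrightarrow> b j \<otimes> c i \<in> A)"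
  proof (intro conjI allI impI)
    show "c n \<in> A" for n using cA by blast
    show "b n \<in> carrier G" for n using bG by blast
    show "inj c" by (rule injc)
    show "inj b" by (rule injb)
    show "b j \<otimes> c i \<in> A" if "j < i" for i j using rel[OF that] .
  qed
  thus ?thesis by (intro exI[where x=c] exI[where x=b])
qed

end

lemma ramsey_part:
  fixes G :: "('a, 'b) monoid_scheme" (structure) and A :: "'a set" and c b :: "nat \<Rightarrow> 'a"
  assumes grp: "group G" and AG: "A \<subseteq> carrier G" and st: "stable_set G A"
    and cA: "\<forall>n. c n \<in> A" and injc: "inj c" and injb: "inj b" and bG: "\<forall>n. b n \<in> carrier G"
    and rel: "\<forall>j i. j < i \<longrightarrow> b j \<otimes>\<^bsub>G\<^esub> c i \<in> A"
  shows "\<exists>B C. infinite B \<and> infinite C \<and>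
           B \<subseteq> {a \<otimes>\<^bsub>G\<^esub> inv\<^bsub>G\<^esub> a' | a a'. a \<in> A \<and> a' \<in> A} \<and>
           C \<subseteq> A \<and>
           (\<forall>b\<in>B. \<forall>c\<in>C. b \<otimes>\<^bsub>G\<^esub> c \<in> A)"
proof -
  interpret group G by (rule grp)
  define col where "col s = (if b (Max s) \<otimes> c (Min s) \<in> A then 0 else (1::nat))" for s :: "nat set"
  obtain Y t where Y: "infinite Y" "t < 2" "\<forall>x\<in>Y. \<forall>y\<in>Y. x \<noteq> y \<longrightarrow> col {x, y} = t"
  proof -
    have "\<forall>x\<in>(UNIV::nat set). \<forall>y\<in>UNIV. x \<noteq> y \<longrightarrow> col {x, y} < 2" by (simp add: col_def)
    from Ramsey2[OF infinite_UNIV_nat this] show ?thesis using that by blast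
  qed
  have colxy: "col {x, y} = (if b y \<otimes> c x \<in> A then 0 else 1)" if "x < y" for x y
    using that by (simp add: col_def max_def min_def)
  define h where "h = enumerate Y"
  have hY: "h n \<in> Y" for n using enumerate_in_set[OF Y(1)] by (simp add: h_def)
  have hm: "m < n \<Longrightarrow> h m < h n" for m n using enumerate_mono[OF _ Y(1)] by (simp add: h_def)
  have hinj: "inj h" using hm by (metis injI linorder_neqE_nat less_irrefl)
  have cG: "c n \<in> carrier G" for n using cA AG by auto
  consider "t = 0" | "t = 1" using Y(2) by linarith
  then show ?thesis
  proof cases
    case 1
    have all: "b x \<otimes> c y \<in> A" if "x \<in> Y" "y \<in> Y" "x \<noteq> y" for x y
    proof (cases "x < y")
      case True thus ?thesis using rel by auto
    next
      case False hence "y < x" using that by linarith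
      thus ?thesis using Y(3) that colxy[of y x] 1 by (auto split: if_splits)
    qed
    define B where "B = range (\<lambda>k. b (h (2*k)))"
    define C where "C = range (\<lambda>k. c (h (2*k+1)))"
    have "inj (\<lambda>k. b (h (2*k)))"
    proof (rule injI)
      fix x y assume "b (h (2*x)) = b (h (2*y))"
      hence "h (2*x) = h (2*y)" by (rule injD[OF injb])
      hence "2*x = 2*y" by (rule injD[OF hinj])
      thus "x = y" by simp
    qed
    hence iB: "infinite B" unfolding B_def by (rule range_inj_infinite)
    have "inj (\<lambda>k. c (h (2*k+1)))"
    proof (rule injI)
      fix x y assume "c (h (2*x+1)) = c (h (2*y+1))"
      hence "h (2*x+1) = h (2*y+1)" by (rule injD[OF injc])
      hence "2*x+1 = 2*y+1" by (rule injD[OF hinj])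
      thus "x = y" by simp
    qed
    hence iC: "infinite C" unfolding C_def by (rule range_inj_infinite)
    have CA: "C \<subseteq> A" using cA by (auto simp: C_def)
    have BC: "\<forall>x\<in>B. \<forall>y\<in>C. x \<otimes> y \<in> A"
    proof (intro ballI)
      fix x y assume "x \<in> B" "y \<in> C"
      then obtain k m where "x = b (h (2*k))" "y = c (h (2*m+1))" by (auto simp: B_def C_def)
      moreover have "h (2*k) \<noteq> h (2*m+1)" proof
        assume "h (2*k) = h (2*m+1)"
        hence "2*k = 2*m+1" by (rule injD[OF hinj])
        thus False by presburger
      qed
      ultimately show "x \<otimes> y \<in> A" using all hY by auto
    qed
    have BAA: "B \<subseteq> {a \<otimes> inv a' | a a'. a \<in> A \<and> a' \<in> A}"
    proof
      fix x assume xB: "x \<in> B"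
      define y where "y = c (h 1)"
      have yC: "y \<in> C" unfolding C_def y_def by (rule range_eqI[of _ _ 0]) simp
      have xG: "x \<in> carrier G" using xB bG by (auto simp: B_def)
      have "x = (x \<otimes> y) \<otimes> inv y" using xG cG by (simp add: y_def m_assoc)
      thus "x \<in> {a \<otimes> inv a' | a a'. a \<in> A \<and> a' \<in> A}" using BC xB yC CA by blast
    qed
    show ?thesis using iB iC BAA CA BC by blast
  next
    case 2
    have no: "b y \<otimes> c x \<notin> A" if "x \<in> Y" "y \<in> Y" "x < y" for x y
      using Y(3) that colxy[of x y] 2 by (auto split: if_splits)
    obtain n where n: "\<not> (\<exists>a b :: nat \<Rightarrow> 'a.
        (\<forall>i<n. a i \<in> carrier G \<and> b i \<in> carrier G) \<and>
        (\<forall>i<n. \<forall>j<n. (b j \<otimes> a i \<in> A \<longleftrightarrow> i \<le> j)))"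
      using st unfolding stable_set_def by blast
    define a' where "a' i = c (h (2*(n-i)+1))" for i
    define b' where "b' j = b (h (2*(n-j)))" for j
    have "(\<forall>i<n. a' i \<in> carrier G \<and> b' i \<in> carrier G) \<and>
        (\<forall>i<n. \<forall>j<n. (b' j \<otimes> a' i \<in> A \<longleftrightarrow> i \<le> j))"
    proof (intro conjI allI impI)
      fix i assume "i < n" show "a' i \<in> carrier G" "b' i \<in> carrier G" using cG bG by (auto simp: a'_def b'_def)
    next
      fix i j assume ij: "i < n" "j < n"
      show "b' j \<otimes> a' i \<in> A \<longleftrightarrow> i \<le> j"
      proof (cases "i \<le> j")
        case True
        hence "h (2*(n-j)) < h (2*(n-i)+1)" using ij by (intro hm) linarith
        thus ?thesis using rel True by (simp add: a'_def b'_def)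
      next
        case False
        hence "h (2*(n-i)+1) < h (2*(n-j))" using ij by (intro hm) linarith
        thus ?thesis using no[OF hY hY] False by (simp add: a'_def b'_def)
      qed
    qed
    thus ?thesis using n by blast
  qed
qed


theorem mainTheorem6:
  fixes G :: "('a, 'b) monoid_scheme" and A :: "'a set"
  assumes "group G"
    and "countable (carrier G)" and "infinite (carrier G)"
    and "amenable G"
    and "A \<subseteq> carrier G"
    and "stable_set G A"
    and "upper_banach_density G A > 0"
  shows "\<exists>B C. infinite B \<and> infinite C \<and>
           B \<subseteq> {a \<otimes>\<^bsub>G\<^esub> inv\<^bsub>G\<^esub> a' | a a'. a \<in> A \<and> a' \<in> A} \<and>
           C \<subseteq> A \<and>
           (\<forall>b\<in>B. \<forall>c\<in>C. b \<otimes>\<^bsub>G\<^esub> c \<in> A)"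
proof -
  obtain F where F: "folner_seq G F" and pos: "0 < upper_density_along F A"
    using assms(7) unfolding upper_banach_density_def less_SUP_iff by auto
  interpret fol G F using assms(1) F by (simp add: fol_def fol_axioms_def)
  define u where "u n = ereal (real (card (A \<inter> F n)) / real (card (F n)))" for n
  have "0 < limsup u" using pos by (simp add: upper_density_along_def u_def[abs_def])
  then obtain e where e: "0 < ereal e" "ereal e < limsup u" using ereal_dense2 by blast
  have fr: "\<exists>\<^sub>F n in sequentially. ereal e < u n"
  proof (rule ccontr)
    assume "\<not> ?thesis"
    hence "eventually (\<lambda>n. u n \<le> ereal e) sequentially" by (simp add: not_frequently not_less)
    hence "limsup u \<le> ereal e" by (rule Limsup_bounded)
    thus False using e(2) by simp
  qed
  have "\<exists>\<^sub>F n in sequentially. e * real (card (F n)) \<le> real (card (A \<inter> F n))"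
    using fr
  proof (rule frequently_elim1)
    fix n assume "ereal e < u n"
    hence lt: "e < real (card (A \<inter> F n)) / real (card (F n))" by (simp add: u_def)
    have "e > 0" using e(1) by simp
    have "card (F n) \<noteq> 0"
    proof
      assume "card (F n) = 0"
      hence "real (card (A \<inter> F n)) / real (card (F n)) = 0" by simp
      thus False using lt \<open>e > 0\<close> by linarith
    qed
    thus "e * real (card (F n)) \<le> real (card (A \<inter> F n))" using lt by (simp add: field_simps)
  qed
  hence PA: "Pos A" using e(1) by (auto simp: Pos_def)
  obtain c b :: "nat \<Rightarrow> 'a" where cb: "\<forall>n. c n \<in> A" "inj c" "inj b" "\<forall>n. b n \<in> carrier G"
     "\<forall>j i. j < i \<longrightarrow> b j \<otimes>\<^bsub>G\<^esub> c i \<in> A"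
    using construct[OF assms(3,5) PA] by blast
  show ?thesis by (rule ramsey_part[OF assms(1,5,6) cb])
qed

end
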